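(* Let $G=(\mathcal V,\mathcal E)$ be a strongly connected digraph with $N>2$ nodes and let the weights $p_{ij}(k)$, $\alpha_i(k)$ be generated as in the Privacy-Preserving Push-Sum Algorithm described in the context. For $k\ge 1$ define the $2N\times 2N$ matrices $$\hat P(k)=\begin{bmatrix} P(k) & I_N\\ \Lambda(k) & 0\end{bmatrix},\qquad P(k)=[p_{ij}(k)]_{i,j=1}^N,\quad \Lambda(k)=\mathrm{diag}(\alpha_1(k),\dots,\alpha_N(k)),$$ and $T_k=\hat P(k)\hat P(k-1)\cdots \hat P(1)$. Then the coefficient of ergodicity $\delta(T_k)$ converges to $0$ almost surely as $k\to\infty$.
   Context: Digraph conventions: $\mathcal V=\{1,\dots,N\}$, no self-loops; $(j,i)\in\mathcal E$ means node $i$ can send messages to node $j$. $N_i^{in}=\{j:(i,j)\in\mathcal E\}$, $N_i^{out}=\{j:(j,i)\in\mathcal E\}$. Strongly connected: a directed path exists from any node to any other node. Privacy-Preserving Push-Sum Algorithm (each node $i$ has a private real initial state $x_i(0)$; $M>0$ is a fixed constant). Initialization: node $i$ draws $x^\alpha_{i,1}(0)\sim U(-M,M)$ and sets $x^\beta_{i,1}(0)=2x_i(0)-x^\alpha_{i,1}(0)$, $x^\alpha_{i,2}(0)=0$, $x^\beta_{i,2}(0)=2$. Weights: at $k=0$, node $i$ draws the numbers $\{p_{ji}(0):j\in N_i^{out}\cup\{i\}\}$ and $\alpha_i(0)$ independently from $\mathcal N(0,M)$ and normalizes them so that $\sum_{j=1}^N p_{ji}(0)+\alpha_i(0)=1$;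 at each $k\ge1$, node $i$ draws $\{p_{ji}(k):j\in N_i^{out}\cup\{i\}\}$ and $\alpha_i(k)$ independently from $U(0,1)$ and normalizes them so that $\sum_{j=1}^N p_{ji}(k)+\alpha_i(k)=1$; in all cases $p_{ji}(k)=0$ if $j\notin N_i^{out}\cup\{i\}$. State update, for $k\ge0$, $l=1,2$: node $i$ sends $p_{ji}(k)x^\alpha_{i,l}(k)$ to each $j\in N_i^{out}$ and updates $$x^\alpha_{i,l}(k+1)=\sum_{j\in N_i^{in}\cup\{i\}}p_{ij}(k)x^\alpha_{j,l}(k)+x^\beta_{i,l}(k),\qquad x^\beta_{i,l}(k+1)=\alpha_i(k)x^\alpha_{i,l}(k).$$ Node $i$'s estimated average is $\hat x^{ave}_i(k+1)=x^\alpha_{i,1}(k+1)/x^\alpha_{i,2}(k+1)$. The substate $x^\beta_{i,l}$ is never transmitted. Coefficient of ergodicity: for a column-stochastic matrix $P_c$, $\delta(P_c)=\max_j\max_{i_1,i_2}|[P_c]_{j i_1}-[P_c]_{j i_2}|$. *)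

theory Defs
  imports "HOL-Probability.Probability" "Jordan_Normal_Form.Matrix"
begin

text \<open>Nodes are 0,...,N-1.  An edge (j,i) in E means node i can send to node j.\<close>

definition out_nbrs :: "(nat \<times> nat) set \<Rightarrow> nat \<Rightarrow> nat set" where
  "out_nbrs E i = {j. (j, i) \<in> E}"

definition in_nbrs :: "(nat \<times> nat) set \<Rightarrow> nat \<Rightarrow> nat set" where
  "in_nbrs E i = {j. (i, j) \<in> E}"

definition digraph_on :: "nat \<Rightarrow> (nat \<times> nat) set \<Rightarrow> bool" where
  "digraph_on N E \<longleftrightarrow> E \<subseteq> {0..<N} \<times> {0..<N} \<and> (\<forall>i. (i, i) \<notin> E)"

definition strongly_connected :: "nat \<Rightarrow> (nat \<times> nat) set \<Rightarrow> bool" where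
  "strongly_connected N E \<longleftrightarrow> (\<forall>i<N. \<forall>j<N. i \<noteq> j \<longrightarrow> (i, j) \<in> E\<^sup>+)"

definition norm_const ::
  "(nat \<times> nat) set \<Rightarrow> (nat \<Rightarrow> nat \<Rightarrow> nat \<Rightarrow> 'a \<Rightarrow> real) \<Rightarrow> (nat \<Rightarrow> nat \<Rightarrow> 'a \<Rightarrow> real)
     \<Rightarrow> nat \<Rightarrow> nat \<Rightarrow> 'a \<Rightarrow> real" where
  "norm_const E u a k i \<omega> = (\<Sum>j\<in>out_nbrs E i \<union> {i}. u k j i \<omega>) + a k i \<omega>"

definition pw ::
  "(nat \<times> nat) set \<Rightarrow> (nat \<Rightarrow> nat \<Rightarrow> nat \<Rightarrow> 'a \<Rightarrow> real) \<Rightarrow> (nat \<Rightarrow> nat \<Rightarrow> 'a \<Rightarrow> real)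
     \<Rightarrow> nat \<Rightarrow> nat \<Rightarrow> nat \<Rightarrow> 'a \<Rightarrow> real" where
  "pw E u a k j i \<omega> = (if j \<in> out_nbrs E i \<union> {i} then u k j i \<omega> / norm_const E u a k i \<omega> else 0)"

definition alphaw ::
  "(nat \<times> nat) set \<Rightarrow> (nat \<Rightarrow> nat \<Rightarrow> nat \<Rightarrow> 'a \<Rightarrow> real) \<Rightarrow> (nat \<Rightarrow> nat \<Rightarrow> 'a \<Rightarrow> real)
     \<Rightarrow> nat \<Rightarrow> nat \<Rightarrow> 'a \<Rightarrow> real" where
  "alphaw E u a k i \<omega> = a k i \<omega> / norm_const E u a k i \<omega>"

definition Phat ::
  "nat \<Rightarrow> (nat \<times> nat) set \<Rightarrow> (nat \<Rightarrow> nat \<Rightarrow> nat \<Rightarrow> 'a \<Rightarrow> real) \<Rightarrow> (nat \<Rightarrow> nat \<Rightarrow> 'a \<Rightarrow> real)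
     \<Rightarrow> nat \<Rightarrow> 'a \<Rightarrow> real mat" where
  "Phat N E u a k \<omega> = mat (2*N) (2*N) (\<lambda>(r, c).
      if r < N \<and> c < N then pw E u a k r c \<omega>
      else if r < N \<and> N \<le> c then (if c - N = r then 1 else 0)
      else if N \<le> r \<and> c < N then (if r - N = c then alphaw E u a k c \<omega> else 0)
      else 0)"

fun Tprod ::
  "nat \<Rightarrow> (nat \<times> nat) set \<Rightarrow> (nat \<Rightarrow> nat \<Rightarrow> nat \<Rightarrow> 'a \<Rightarrow> real) \<Rightarrow> (nat \<Rightarrow> nat \<Rightarrow> 'a \<Rightarrow> real)
     \<Rightarrow> nat \<Rightarrow> 'a \<Rightarrow> real mat" where
  "Tprod N E u a 0 \<omega> = 1\<^sub>m (2*N)"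
| "Tprod N E u a (Suc k) \<omega> = Phat N E u a (Suc k) \<omega> * Tprod N E u a k \<omega>"

definition ergodicity_coeff :: "real mat \<Rightarrow> real" where
  "ergodicity_coeff P = Max {\<bar>P $$ (j, i1) - P $$ (j, i2)\<bar> | j i1 i2.
      j < dim_row P \<and> i1 < dim_col P \<and> i2 < dim_col P}"

definition draw_index :: "nat \<Rightarrow> (nat \<times> nat) set \<Rightarrow> ((nat \<times> nat \<times> nat) + (nat \<times> nat)) set" where
  "draw_index N E = Inl ` {(k, j, i). 1 \<le> k \<and> i < N \<and> j \<in> out_nbrs E i \<union> {i}}
                  \<union> Inr ` {(k, i). 1 \<le> k \<and> i < N}"

definition draws ::
  "(nat \<Rightarrow> nat \<Rightarrow> nat \<Rightarrow> 'a \<Rightarrow> real) \<Rightarrow> (nat \<Rightarrow> nat \<Rightarrow> 'a \<Rightarrow> real)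
     \<Rightarrow> ((nat \<times> nat \<times> nat) + (nat \<times> nat)) \<Rightarrow> 'a \<Rightarrow> real" where
  "draws u a = case_sum (\<lambda>(k, j, i). u k j i) (\<lambda>(k, i). a k i)"

end

theory Submission
  imports Defs
begin

definition cs :: "nat \<Rightarrow> real mat \<Rightarrow> bool" where
  "cs n A \<longleftrightarrow> A \<in> carrier_mat n n \<and> (\<forall>i<n. \<forall>j<n. 0 \<le> A $$ (i,j)) \<and> (\<forall>j<n. (\<Sum>i<n. A $$ (i,j)) = 1)"

lemma mult_entry:
  assumes "A \<in> carrier_mat n n" "B \<in> carrier_mat n n" "i < n" "j < n"
  shows "(A * B) $$ (i,j) = (\<Sum>l<n. A $$ (i,l) * B $$ (l,j))"
  using assms by (auto simp: index_mult_mat scalar_prod_def lessThan_atLeast0 intro!: sum.cong)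

lemma cs_one: "cs n (1\<^sub>m n)"
proof -
  have "(\<Sum>i<n. (1\<^sub>m n :: real mat) $$ (i,j)) = 1" if "j < n" for j
  proof -
    have "(\<Sum>i<n. (1\<^sub>m n :: real mat) $$ (i,j)) = (\<Sum>i<n. if i = j then 1 else 0)"
      using that by (intro sum.cong) auto
    also have "\<dots> = 1" using that by simp
    finally show ?thesis .
  qed
  then show ?thesis unfolding cs_def by auto
qed

lemma cs_mult:
  assumes "cs n A" "cs n B" shows "cs n (A * B)"
proof -
  have A: "A \<in> carrier_mat n n" and B: "B \<in> carrier_mat n n" using assms by (auto simp: cs_def)
  have nn: "0 \<le> (A*B) $$ (i,j)" if "i<n" "j<n" for i j
    using assms that by (auto simp: mult_entry[OF A B] cs_def intro!: sum_nonneg)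
  have "(\<Sum>i<n. (A*B) $$ (i,j)) = 1" if "j<n" for j
  proof -
    have "(\<Sum>i<n. (A*B) $$ (i,j)) = (\<Sum>i<n. \<Sum>l<n. A $$ (i,l) * B $$ (l,j))"
      using that by (intro sum.cong) (auto simp: mult_entry[OF A B])
    also have "\<dots> = (\<Sum>l<n. (\<Sum>i<n. A $$ (i,l)) * B $$ (l,j))"
      by (subst sum.swap) (simp add: sum_distrib_right)
    also have "\<dots> = (\<Sum>l<n. B $$ (l,j))" using assms(1) by (auto simp: cs_def)
    also have "\<dots> = 1" using assms(2) that by (auto simp: cs_def)
    finally show ?thesis .
  qed
  with nn A B show ?thesis by (auto simp: cs_def)
qed

lemma l1_nonexp:
  assumes "cs n A"
  shows "(\<Sum>r<n. \<bar>\<Sum>l<n. A $$ (r,l) * z l\<bar>) \<le> (\<Sum>l<n. \<bar>z l\<bar>)"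
proof -
  have "(\<Sum>r<n. \<bar>\<Sum>l<n. A $$ (r,l) * z l\<bar>) \<le> (\<Sum>r<n. \<Sum>l<n. A $$ (r,l) * \<bar>z l\<bar>)"
  proof (intro sum_mono)
    fix r assume r: "r \<in> {..<n}"
    have "\<bar>\<Sum>l<n. A $$ (r,l) * z l\<bar> \<le> (\<Sum>l<n. \<bar>A $$ (r,l) * z l\<bar>)" by (rule sum_abs)
    also have "\<dots> = (\<Sum>l<n. A $$ (r,l) * \<bar>z l\<bar>)"
      using assms r by (intro sum.cong) (auto simp: cs_def abs_mult)
    finally show "\<bar>\<Sum>l<n. A $$ (r,l) * z l\<bar> \<le> (\<Sum>l<n. A $$ (r,l) * \<bar>z l\<bar>)" .
  qed
  also have "\<dots> = (\<Sum>l<n. (\<Sum>r<n. A $$ (r,l)) * \<bar>z l\<bar>)"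
    by (subst sum.swap) (simp add: sum_distrib_right)
  also have "\<dots> = (\<Sum>l<n. \<bar>z l\<bar>)" using assms by (auto simp: cs_def)
  finally show ?thesis .
qed

lemma l1_contract:
  assumes "cs n A" "\<And>r l. r < n \<Longrightarrow> l < n \<Longrightarrow> e \<le> A $$ (r,l)" "(\<Sum>l<n. z l) = 0"
  shows "(\<Sum>r<n. \<bar>\<Sum>l<n. A $$ (r,l) * z l\<bar>) \<le> (1 - n * e) * (\<Sum>l<n. \<bar>z l\<bar>)"
proof -
  have "(\<Sum>r<n. \<bar>\<Sum>l<n. A $$ (r,l) * z l\<bar>) \<le> (\<Sum>r<n. \<Sum>l<n. (A $$ (r,l) - e) * \<bar>z l\<bar>)"
  proof (intro sum_mono)
    fix r assume r: "r \<in> {..<n}"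
    have "(\<Sum>l<n. A $$ (r,l) * z l) = (\<Sum>l<n. (A $$ (r,l) - e) * z l) + e * (\<Sum>l<n. z l)"
      by (simp add: algebra_simps sum.distrib sum_distrib_left sum_subtractf)
    also have "\<dots> = (\<Sum>l<n. (A $$ (r,l) - e) * z l)" using assms(3) by simp
    finally have eq: "(\<Sum>l<n. A $$ (r,l) * z l) = (\<Sum>l<n. (A $$ (r,l) - e) * z l)" .
    have "\<bar>\<Sum>l<n. (A $$ (r,l) - e) * z l\<bar> \<le> (\<Sum>l<n. \<bar>(A $$ (r,l) - e) * z l\<bar>)" by (rule sum_abs)
    also have "\<dots> = (\<Sum>l<n. (A $$ (r,l) - e) * \<bar>z l\<bar>)"
      using assms(2) r by (intro sum.cong) (auto simp: abs_mult)
    finally show "\<bar>\<Sum>l<n. A $$ (r,l) * z l\<bar> \<le> (\<Sum>l<n. (A $$ (r,l) - e) * \<bar>z l\<bar>)"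
      using eq by simp
  qed
  also have "\<dots> = (\<Sum>l<n. (\<Sum>r<n. A $$ (r,l) - e) * \<bar>z l\<bar>)"
    by (subst sum.swap) (simp add: sum_distrib_right)
  also have "\<dots> = (\<Sum>l<n. (1 - n * e) * \<bar>z l\<bar>)"
    using assms(1) by (intro sum.cong) (auto simp: cs_def sum_subtractf)
  also have "\<dots> = (1 - n * e) * (\<Sum>l<n. \<bar>z l\<bar>)" by (simp add: sum_distrib_left)
  finally show ?thesis .
qed

lemma cs_ne_le:
  assumes "cs n A" "\<And>r l. r < n \<Longrightarrow> l < n \<Longrightarrow> e \<le> A $$ (r,l)" "0 < n"
  shows "n * e \<le> 1"
proof -
  have "(\<Sum>r<n. e) \<le> (\<Sum>r<n. A $$ (r,0))" using assms by (intro sum_mono) auto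
  also have "\<dots> = 1" using assms by (auto simp: cs_def)
  finally show ?thesis by simp
qed

fun TT :: "(nat \<Rightarrow> real mat) \<Rightarrow> nat \<Rightarrow> nat \<Rightarrow> real mat" where
  "TT P n 0 = 1\<^sub>m n"
| "TT P n (Suc k) = P (Suc k) * TT P n k"

fun BP :: "(nat \<Rightarrow> real mat) \<Rightarrow> nat \<Rightarrow> nat \<Rightarrow> nat \<Rightarrow> real mat" where
  "BP P n m 0 = 1\<^sub>m n"
| "BP P n m (Suc t) = P (m + Suc t) * BP P n m t"

lemma BP_cs:
  assumes "\<And>k. k \<ge> 1 \<Longrightarrow> cs n (P k)"
  shows "cs n (BP P n m t)"
  by (induction t) (auto intro!: cs_mult assms cs_one)

lemma TT_cs:
  assumes "\<And>k. k \<ge> 1 \<Longrightarrow> cs n (P k)"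
  shows "cs n (TT P n k)"
  by (induction k) (auto intro!: cs_mult assms cs_one)

lemma TT_split:
  assumes "\<And>k. k \<ge> 1 \<Longrightarrow> cs n (P k)"
  shows "TT P n (m + t) = BP P n m t * TT P n m"
proof (induction t)
  case 0
  have "TT P n m \<in> carrier_mat n n" using TT_cs[OF assms] by (auto simp: cs_def)
  then show ?case by (simp add: left_mult_one_mat)
next
  case (Suc t)
  have c1: "P (m + Suc t) \<in> carrier_mat n n" using assms[of "m + Suc t"] by (auto simp: cs_def)
  have c2: "BP P n m t \<in> carrier_mat n n" using BP_cs[OF assms] by (auto simp: cs_def)
  have c3: "TT P n m \<in> carrier_mat n n" using TT_cs[OF assms] by (auto simp: cs_def)
  have "TT P n (m + Suc t) = P (m + Suc t) * TT P n (m + t)" by simp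
  also have "\<dots> = P (m + Suc t) * (BP P n m t * TT P n m)" using Suc by simp
  also have "\<dots> = BP P n m (Suc t) * TT P n m"
    using assoc_mult_mat[OF c1 c2 c3] by simp
  finally show ?case .
qed

definition yv :: "(nat \<Rightarrow> real mat) \<Rightarrow> nat \<Rightarrow> nat \<Rightarrow> nat \<Rightarrow> nat \<Rightarrow> nat \<Rightarrow> real" where
  "yv P n i1 i2 k l = TT P n k $$ (l, i1) - TT P n k $$ (l, i2)"

definition ell :: "(nat \<Rightarrow> real mat) \<Rightarrow> nat \<Rightarrow> nat \<Rightarrow> nat \<Rightarrow> nat \<Rightarrow> real" where
  "ell P n i1 i2 k = (\<Sum>l<n. \<bar>yv P n i1 i2 k l\<bar>)"

lemma yv_split:
  assumes "\<And>k. k \<ge> 1 \<Longrightarrow> cs n (P k)" "i1 < n" "i2 < n" "r < n"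
  shows "yv P n i1 i2 (m + t) r = (\<Sum>c<n. BP P n m t $$ (r,c) * yv P n i1 i2 m c)"
proof -
  have c2: "BP P n m t \<in> carrier_mat n n" using BP_cs[OF assms(1)] by (auto simp: cs_def)
  have c3: "TT P n m \<in> carrier_mat n n" using TT_cs[OF assms(1)] by (auto simp: cs_def)
  have e: "TT P n (m + t) = BP P n m t * TT P n m" by (rule TT_split[OF assms(1)])
  show ?thesis
    unfolding yv_def e using assms
    by (simp add: mult_entry[OF c2 c3] sum_subtractf right_diff_distrib)
qed

lemma yv_sum0:
  assumes "\<And>k. k \<ge> 1 \<Longrightarrow> cs n (P k)" "i1 < n" "i2 < n"
  shows "(\<Sum>l<n. yv P n i1 i2 k l) = 0"
  using TT_cs[where P=P and n=n and k=k, OF assms(1)] assms(2,3) by (simp add: yv_def sum_subtractf cs_def)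

lemma ell_mono:
  assumes "\<And>k. k \<ge> 1 \<Longrightarrow> cs n (P k)" "i1 < n" "i2 < n"
  shows "ell P n i1 i2 (m + t) \<le> ell P n i1 i2 m"
  unfolding ell_def using yv_split[OF assms] l1_nonexp[OF BP_cs[OF assms(1)]]
  by simp

lemma ell_contract:
  assumes "\<And>k. k \<ge> 1 \<Longrightarrow> cs n (P k)" "i1 < n" "i2 < n"
    "\<And>r c. r < n \<Longrightarrow> c < n \<Longrightarrow> e \<le> BP P n m t $$ (r,c)"
  shows "ell P n i1 i2 (m + t) \<le> (1 - n * e) * ell P n i1 i2 m"
  unfolding ell_def using yv_split[OF assms(1-3)]
    l1_contract[OF BP_cs[OF assms(1)] assms(4) yv_sum0[OF assms(1-3)]]
  by simp

lemma ell_0: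
  assumes "i1 < n" "i2 < n"
  shows "ell P n i1 i2 0 \<le> 2"
proof -
  have "ell P n i1 i2 0 \<le> (\<Sum>l<n. (if l = i1 then 1 else 0) + (if l = i2 then 1 else 0))"
    unfolding ell_def yv_def using assms by (intro sum_mono) (auto simp: index_one_mat)
  also have "\<dots> = 2" using assms by (simp add: sum.distrib)
  finally show ?thesis .
qed

lemma ell_nonneg: "0 \<le> ell P n i1 i2 k"
  unfolding ell_def by (auto intro: sum_nonneg)

lemma erg_bound:
  assumes "A \<in> carrier_mat n n" "0 < n"
    "\<And>j i1 i2. j < n \<Longrightarrow> i1 < n \<Longrightarrow> i2 < n \<Longrightarrow> \<bar>A $$ (j,i1) - A $$ (j,i2)\<bar> \<le> b"
  shows "ergodicity_coeff A \<le> b" "0 \<le> ergodicity_coeff A"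
proof -
  let ?S = "{\<bar>A $$ (j, i1) - A $$ (j, i2)\<bar> | j i1 i2. j < dim_row A \<and> i1 < dim_col A \<and> i2 < dim_col A}"
  have sub: "?S \<subseteq> (\<lambda>(j,i1,i2). \<bar>A $$ (j, i1) - A $$ (j, i2)\<bar>) ` ({..<n} \<times> {..<n} \<times> {..<n})"
    using assms(1) apply (auto simp: image_iff) by blast
  have fin: "finite ?S" by (rule finite_subset[OF sub]) auto
  have mem: "\<bar>A $$ (0, 0) - A $$ (0, 0)\<bar> \<in> ?S" using assms(1,2) by auto
  then have ne: "?S \<noteq> {}" by auto
  show "ergodicity_coeff A \<le> b"
    unfolding ergodicity_coeff_def using fin ne assms by (subst Max_le_iff) auto
  show "0 \<le> ergodicity_coeff A"
    unfolding ergodicity_coeff_def using Max_ge[OF fin mem] by simp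
qed

lemma det_conv:
  assumes cs: "\<And>k. k \<ge> 1 \<Longrightarrow> cs n (P k)" and n: "0 < n" and e: "0 < e"
    and good: "\<And>K. \<exists>s\<ge>K. \<forall>r<n. \<forall>c<n. e \<le> BP P n s L $$ (r,c)"
  shows "(\<lambda>k. ergodicity_coeff (TT P n k)) \<longlonglongrightarrow> 0"
proof -
  define \<rho> where "\<rho> = 1 - n * e"
  obtain s0 where s0: "\<forall>r<n. \<forall>c<n. e \<le> BP P n s0 L $$ (r,c)" using good by blast
  have "n * e \<le> 1" using cs_ne_le[OF BP_cs[where P=P and m=s0 and t=L, OF cs] _ n] s0 by blast
  then have \<rho>0: "0 \<le> \<rho>" unfolding \<rho>_def by simp
  have \<rho>1: "\<rho> < 1" unfolding \<rho>_def using n e by simp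
  have claim: "\<exists>K. \<forall>k\<ge>K. \<forall>i1<n. \<forall>i2<n. ell P n i1 i2 k \<le> 2 * \<rho> ^ j" for j
  proof (induction j)
    case 0
    have "ell P n i1 i2 k \<le> 2" if "i1 < n" "i2 < n" for i1 i2 k
      using ell_mono[where P=P and m=0 and t=k, OF cs that] ell_0[where P=P, OF that] by simp
    then show ?case by auto
  next
    case (Suc j)
    then obtain K where K: "\<forall>k\<ge>K. \<forall>i1<n. \<forall>i2<n. ell P n i1 i2 k \<le> 2 * \<rho> ^ j" by blast
    obtain s where s: "s \<ge> K" "\<forall>r<n. \<forall>c<n. e \<le> BP P n s L $$ (r,c)" using good by blast
    have "ell P n i1 i2 k \<le> 2 * \<rho> ^ Suc j" if k: "k \<ge> s + L" and i: "i1 < n" "i2 < n" for i1 i2 k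
    proof -
      have "ell P n i1 i2 k = ell P n i1 i2 ((s + L) + (k - (s + L)))" using k by simp
      also have "\<dots> \<le> ell P n i1 i2 (s + L)" by (rule ell_mono[where P=P, OF cs i])
      also have "\<dots> \<le> \<rho> * ell P n i1 i2 s" unfolding \<rho>_def
        using s(2) by (intro ell_contract[where P=P, OF cs i]) auto
      also have "\<dots> \<le> \<rho> * (2 * \<rho> ^ j)" using K s(1) i \<rho>0 by (intro mult_left_mono) auto
      finally show ?thesis by simp
    qed
    then show ?case by blast
  qed
  show ?thesis
  proof (rule LIMSEQ_I)
    fix r :: real assume r: "0 < r"
    obtain j where j: "\<rho> ^ j < r / 2" using real_arch_pow_inv[of "r/2" \<rho>] r \<rho>1 by auto
    obtain K where K: "\<forall>k\<ge>K. \<forall>i1<n. \<forall>i2<n. ell P n i1 i2 k \<le> 2 * \<rho> ^ j" using claim by blast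
    have "norm (ergodicity_coeff (TT P n k) - 0) < r" if "k \<ge> K" for k
    proof -
      have C: "TT P n k \<in> carrier_mat n n" using TT_cs[where P=P and k=k, OF cs] by (auto simp: cs_def)
      have b: "\<bar>TT P n k $$ (l,i1) - TT P n k $$ (l,i2)\<bar> \<le> 2 * \<rho> ^ j"
        if "l < n" "i1 < n" "i2 < n" for l i1 i2
      proof -
        have "\<bar>TT P n k $$ (l,i1) - TT P n k $$ (l,i2)\<bar> = \<bar>yv P n i1 i2 k l\<bar>" by (simp add: yv_def)
        also have "\<dots> \<le> ell P n i1 i2 k" unfolding ell_def
          by (rule member_le_sum[where f="\<lambda>l. \<bar>yv P n i1 i2 k l\<bar>"]) (use that in auto)
        also have "\<dots> \<le> 2 * \<rho> ^ j" using K \<open>k \<ge> K\<close> that by auto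
        finally show ?thesis .
      qed
      have "ergodicity_coeff (TT P n k) \<le> 2 * \<rho> ^ j" by (rule erg_bound(1)[OF C n b])
      moreover have "0 \<le> ergodicity_coeff (TT P n k)" by (rule erg_bound(2)[OF C n b])
      ultimately show ?thesis using j by simp
    qed
    then show "\<exists>no. \<forall>k\<ge>no. norm (ergodicity_coeff (TT P n k) - 0) < r" by blast
  qed
qed

definition posw :: "nat \<Rightarrow> (nat \<times> nat) set \<Rightarrow> (nat \<Rightarrow> nat \<Rightarrow> nat \<Rightarrow> 'a \<Rightarrow> real) \<Rightarrow> (nat \<Rightarrow> nat \<Rightarrow> 'a \<Rightarrow> real)
     \<Rightarrow> nat \<Rightarrow> 'a \<Rightarrow> bool" where
  "posw N E u a k \<omega> \<longleftrightarrow> (\<forall>i<N. (\<forall>j\<in>out_nbrs E i \<union> {i}. 0 < u k j i \<omega> \<and> u k j i \<omega> < 1)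
      \<and> 0 < a k i \<omega> \<and> a k i \<omega> < 1)"

definition bigw :: "nat \<Rightarrow> (nat \<times> nat) set \<Rightarrow> (nat \<Rightarrow> nat \<Rightarrow> nat \<Rightarrow> 'a \<Rightarrow> real) \<Rightarrow> (nat \<Rightarrow> nat \<Rightarrow> 'a \<Rightarrow> real)
     \<Rightarrow> nat \<Rightarrow> 'a \<Rightarrow> bool" where
  "bigw N E u a k \<omega> \<longleftrightarrow> (\<forall>i<N. (\<forall>j\<in>out_nbrs E i \<union> {i}. 1/2 \<le> u k j i \<omega>) \<and> 1/2 \<le> a k i \<omega>)"

lemma out_sub:
  assumes "digraph_on N E" "i < N"
  shows "out_nbrs E i \<union> {i} \<subseteq> {..<N}"
  using assms by (auto simp: digraph_on_def out_nbrs_def)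

lemma card_out_le:
  assumes "digraph_on N E" "i < N"
  shows "card (out_nbrs E i \<union> {i}) \<le> N"
  using card_mono[OF _ out_sub[OF assms]] by simp

lemma norm_pos:
  assumes "posw N E u a k \<omega>" "i < N" "digraph_on N E"
  shows "0 < norm_const E u a k i \<omega>"
proof -
  have "0 \<le> (\<Sum>j\<in>out_nbrs E i \<union> {i}. u k j i \<omega>)"
    using assms by (intro sum_nonneg) (auto simp: posw_def less_imp_le)
  moreover have "0 < a k i \<omega>" using assms by (auto simp: posw_def)
  ultimately show ?thesis unfolding norm_const_def by simp
qed

lemma norm_le:
  assumes "posw N E u a k \<omega>" "i < N" "digraph_on N E"
  shows "norm_const E u a k i \<omega> \<le> N + 1"
proof -
  have fin: "finite (out_nbrs E i \<union> {i})" using finite_subset[OF out_sub[OF assms(3,2)]] by simp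
  have "(\<Sum>j\<in>out_nbrs E i \<union> {i}. u k j i \<omega>) \<le> (\<Sum>j\<in>out_nbrs E i \<union> {i}. 1)"
    using assms by (intro sum_mono) (auto simp: posw_def less_imp_le)
  also have "\<dots> \<le> N" using card_out_le[OF assms(3,2)] by simp
  finally have "(\<Sum>j\<in>out_nbrs E i \<union> {i}. u k j i \<omega>) \<le> N" .
  moreover have "a k i \<omega> \<le> 1" using assms by (auto simp: posw_def)
  ultimately show ?thesis unfolding norm_const_def by simp
qed

lemma Phat_carrier: "Phat N E u a k \<omega> \<in> carrier_mat (2*N) (2*N)"
  by (simp add: Phat_def)

lemma sum_split2N:
  fixes f :: "nat \<Rightarrow> real"
  shows "(\<Sum>r<2*N. f r) = (\<Sum>r<N. f r) + (\<Sum>r\<in>{N..<2*N}. f r)"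
proof -
  have e: "{..<N} \<union> {N..<2*N} = {..<2*N}" by auto
  have "sum f ({..<N} \<union> {N..<2*N}) = sum f {..<N} + sum f {N..<2*N}"
    by (rule sum.union_disjoint) auto
  then show ?thesis unfolding e .
qed

lemma Phat_entry:
  assumes "r < 2*N" "c < 2*N"
  shows "Phat N E u a k \<omega> $$ (r,c) = (if r < N \<and> c < N then pw E u a k r c \<omega>
      else if r < N \<and> N \<le> c then (if c - N = r then 1 else 0)
      else if N \<le> r \<and> c < N then (if r - N = c then alphaw E u a k c \<omega> else 0)
      else 0)"
  using assms unfolding Phat_def by (subst index_mat) auto

lemma posw_u:
  assumes "posw N E u a k \<omega>" "i < N" "j \<in> out_nbrs E i \<union> {i}"
  shows "0 < u k j i \<omega>" "u k j i \<omega> < 1"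
  using assms unfolding posw_def by blast+

lemma posw_a:
  assumes "posw N E u a k \<omega>" "i < N"
  shows "0 < a k i \<omega>" "a k i \<omega> < 1"
  using assms unfolding posw_def by blast+

lemma pw_nn:
  assumes "posw N E u a k \<omega>" "c < N" "digraph_on N E"
  shows "0 \<le> pw E u a k r c \<omega>"
proof (cases "r \<in> out_nbrs E c \<union> {c}")
  case True
  then show ?thesis unfolding pw_def
    using posw_u(1)[OF assms(1,2) True] norm_pos[OF assms(1,2,3)] by simp
qed (simp add: pw_def)

lemma alphaw_nn:
  assumes "posw N E u a k \<omega>" "c < N" "digraph_on N E"
  shows "0 \<le> alphaw E u a k c \<omega>"
  unfolding alphaw_def using posw_a(1)[OF assms(1,2)] norm_pos[OF assms(1,2,3)] by simp

lemma Phat_cs: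
  assumes "posw N E u a k \<omega>" "digraph_on N E"
  shows "cs (2*N) (Phat N E u a k \<omega>)"
proof -
  let ?P = "Phat N E u a k \<omega>"
  have nn: "0 \<le> ?P $$ (r,c)" if "r < 2*N" "c < 2*N" for r c
    unfolding Phat_entry[OF that] using pw_nn[OF assms(1) _ assms(2)] alphaw_nn[OF assms(1) _ assms(2)]
    by auto
  have cols: "(\<Sum>r<2*N. ?P $$ (r,c)) = 1" if c: "c < 2*N" for c
  proof (cases "c < N")
    case True
    have np: "0 < norm_const E u a k c \<omega>" by (rule norm_pos[OF assms(1) True assms(2)])
    have s1: "(\<Sum>r<N. ?P $$ (r,c)) = (\<Sum>r<N. pw E u a k r c \<omega>)"
      by (rule sum.cong[OF refl]) (use True in \<open>auto simp: Phat_entry\<close>)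
    have "(\<Sum>r<N. pw E u a k r c \<omega>) = (\<Sum>r\<in>out_nbrs E c \<union> {c}. pw E u a k r c \<omega>)"
    proof (rule sum.mono_neutral_right)
      show "out_nbrs E c \<union> {c} \<subseteq> {..<N}" by (rule out_sub[OF assms(2) True])
    qed (auto simp: pw_def)
    also have "\<dots> = (\<Sum>r\<in>out_nbrs E c \<union> {c}. u k r c \<omega> / norm_const E u a k c \<omega>)"
      by (rule sum.cong[OF refl]) (auto simp: pw_def)
    also have "\<dots> = (\<Sum>r\<in>out_nbrs E c \<union> {c}. u k r c \<omega>) / norm_const E u a k c \<omega>"
      by (rule sum_divide_distrib[symmetric])
    finally have s1': "(\<Sum>r<N. ?P $$ (r,c)) = (\<Sum>r\<in>out_nbrs E c \<union> {c}. u k r c \<omega>) / norm_const E u a k c \<omega>"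
      using s1 by simp
    have "(\<Sum>r\<in>{N..<2*N}. ?P $$ (r,c)) = (\<Sum>r\<in>{N..<2*N}. if r = c + N then alphaw E u a k c \<omega> else 0)"
      by (rule sum.cong[OF refl]) (use True in \<open>auto simp: Phat_entry\<close>)
    also have "\<dots> = alphaw E u a k c \<omega>"
      by (subst sum.delta) (use True in auto)
    finally have s2: "(\<Sum>r\<in>{N..<2*N}. ?P $$ (r,c)) = a k c \<omega> / norm_const E u a k c \<omega>"
      by (simp add: alphaw_def)
    have "(\<Sum>r\<in>out_nbrs E c \<union> {c}. u k r c \<omega>) / norm_const E u a k c \<omega> + a k c \<omega> / norm_const E u a k c \<omega>
        = norm_const E u a k c \<omega> / norm_const E u a k c \<omega>"
      unfolding add_divide_distrib[symmetric] by (simp add: norm_const_def)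
    also have "\<dots> = 1" using np by simp
    finally show ?thesis unfolding sum_split2N s1' s2 .
  next
    case False
    have s1: "(\<Sum>r<N. ?P $$ (r,c)) = (\<Sum>r<N. if r = c - N then 1 else 0)"
      by (rule sum.cong[OF refl]) (use False c in \<open>auto simp: Phat_entry\<close>)
    also have "\<dots> = 1" by (subst sum.delta) (use False c in auto)
    finally have s1: "(\<Sum>r<N. ?P $$ (r,c)) = 1" .
    have s2: "(\<Sum>r\<in>{N..<2*N}. ?P $$ (r,c)) = 0"
      by (rule sum.neutral) (use False c in \<open>auto simp: Phat_entry\<close>)
    show ?thesis unfolding sum_split2N s1 s2 by simp
  qed
  have A: "\<forall>i<2*N. \<forall>j<2*N. 0 \<le> ?P $$ (i,j)" using nn by blast
  have B: "\<forall>j<2*N. (\<Sum>i<2*N. ?P $$ (i,j)) = 1" using cols by blast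
  show ?thesis unfolding cs_def using Phat_carrier A B by (intro conjI)
qed

definition patt :: "nat \<Rightarrow> (nat \<times> nat) set \<Rightarrow> nat \<Rightarrow> nat \<Rightarrow> bool" where
  "patt N E r c \<longleftrightarrow> (r < N \<and> c < N \<and> r \<in> out_nbrs E c \<union> {c}) \<or> (r < N \<and> c = r + N)
      \<or> (N \<le> r \<and> r < 2*N \<and> c = r - N)"

lemma frac_lb:
  fixes x d :: real
  assumes "1/2 \<le> x" "0 < d" "d \<le> real (N + 1)"
  shows "1 / (2 * (real N + 1)) \<le> x / d"
proof -
  have "d \<le> 2 * x * (real N + 1)"
  proof -
    have "0 \<le> (2 * x - 1) * (real N + 1)" using assms(1) by (intro mult_nonneg_nonneg) auto
    then have "real N + 1 \<le> 2 * x * (real N + 1)" by (simp add: algebra_simps)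
    moreover have "d \<le> real N + 1" using assms(3) by simp
    ultimately show ?thesis by linarith
  qed
  then show ?thesis using assms(2) by (simp add: field_simps)
qed

lemma Phat_lb:
  assumes "posw N E u a k \<omega>" "bigw N E u a k \<omega>" "digraph_on N E" "r < 2*N" "c < 2*N" "patt N E r c"
  shows "1 / (2 * (real N + 1)) \<le> Phat N E u a k \<omega> $$ (r,c)"
proof -
  consider (A) "r < N" "c < N" "r \<in> out_nbrs E c \<union> {c}" | (B) "r < N" "c = r + N"
    | (C) "N \<le> r" "r < 2*N" "c = r - N"
    using assms(6) unfolding patt_def by blast
  then show ?thesis
  proof cases
    case A
    have "1/2 \<le> u k r c \<omega>" using assms(2) A unfolding bigw_def by blast
    then have "1 / (2 * (real N + 1)) \<le> u k r c \<omega> / norm_const E u a k c \<omega>"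
      by (rule frac_lb[OF _ norm_pos[OF assms(1) A(2) assms(3)] norm_le[OF assms(1) A(2) assms(3)]])
    then show ?thesis using A assms(4,5) by (simp add: Phat_entry pw_def)
  next
    case B
    have "1 / (2 * (real N + 1)) \<le> 1" by (simp add: field_simps)
    then show ?thesis using B assms(4,5) by (simp add: Phat_entry)
  next
    case C
    have c: "c < N" using C by simp
    have "1/2 \<le> a k c \<omega>" using assms(2) c unfolding bigw_def by blast
    then have "1 / (2 * (real N + 1)) \<le> a k c \<omega> / norm_const E u a k c \<omega>"
      by (rule frac_lb[OF _ norm_pos[OF assms(1) c assms(3)] norm_le[OF assms(1) c assms(3)]])
    then show ?thesis using C c assms(4,5) by (simp add: Phat_entry alphaw_def)
  qed
qed

inductive reach :: "nat \<Rightarrow> (nat \<times> nat) set \<Rightarrow> nat \<Rightarrow> nat \<Rightarrow> nat \<Rightarrow> bool" for N E where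
  reach0: "c < 2*N \<Longrightarrow> reach N E 0 c c"
| reachS: "reach N E t c l \<Longrightarrow> r < 2*N \<Longrightarrow> patt N E r l \<Longrightarrow> reach N E (Suc t) c r"

lemma reach_lt: "reach N E t c r \<Longrightarrow> r < 2*N \<and> c < 2*N"
  by (induction rule: reach.induct) auto

lemma BP_lb:
  assumes pos: "\<And>k. k \<ge> 1 \<Longrightarrow> posw N E u a k \<omega>" and dg: "digraph_on N E"
    and "reach N E t c r"
    and big: "\<And>k. s < k \<Longrightarrow> k \<le> s + t \<Longrightarrow> bigw N E u a k \<omega>"
  shows "(1 / (2 * (real N + 1))) ^ t \<le> BP (\<lambda>k. Phat N E u a k \<omega>) (2*N) s t $$ (r,c)"
  using assms(3) big
proof (induction rule: reach.induct)
  case (reach0 c)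
  then show ?case by (simp add: index_one_mat)
next
  case (reachS t c l r)
  let ?P = "\<lambda>k. Phat N E u a k \<omega>"
  let ?\<eta> = "1 / (2 * (real N + 1))"
  have csP: "cs (2*N) (?P k)" if "k \<ge> 1" for k using Phat_cs[OF pos[OF that] dg] .
  have IH: "?\<eta> ^ t \<le> BP ?P (2*N) s t $$ (l,c)" using reachS by auto
  have rl: "reach N E t c l" and r2: "r < 2*N" and pt: "patt N E r l"
    and bg: "\<And>k. s < k \<Longrightarrow> k \<le> s + Suc t \<Longrightarrow> bigw N E u a k \<omega>" using reachS by auto
  have lc: "l < 2*N" "c < 2*N" using reach_lt[OF rl] by auto
  have A: "?P (s + Suc t) \<in> carrier_mat (2*N) (2*N)" by (rule Phat_carrier)
  have B: "BP ?P (2*N) s t \<in> carrier_mat (2*N) (2*N)" using BP_cs[where P="?P", OF csP] by (auto simp: cs_def)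
  have e1: "?\<eta> \<le> ?P (s + Suc t) $$ (r,l)"
    by (rule Phat_lb[OF pos[of "s + Suc t"] bg dg r2 lc(1) pt]) auto
  have "?\<eta> ^ Suc t = ?\<eta> * ?\<eta> ^ t" by simp
  also have "\<dots> \<le> ?P (s + Suc t) $$ (r,l) * BP ?P (2*N) s t $$ (l,c)"
    by (rule mult_mono[OF e1 IH]) (use csP[of "s + Suc t"] r2 lc in \<open>auto simp: cs_def\<close>)
  also have "\<dots> \<le> (\<Sum>l'<2*N. ?P (s + Suc t) $$ (r,l') * BP ?P (2*N) s t $$ (l',c))"
  proof (rule member_le_sum[where f="\<lambda>l'. ?P (s + Suc t) $$ (r,l') * BP ?P (2*N) s t $$ (l',c)"])
    show "l \<in> {..<2*N}" using lc by simp
    fix x assume "x \<in> {..<2*N} - {l}"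
    then have x: "x < 2*N" by simp
    have "0 \<le> ?P (s + Suc t) $$ (r,x)" using csP[of "s + Suc t"] x r2 by (auto simp: cs_def)
    moreover have "0 \<le> BP ?P (2*N) s t $$ (x,c)" using BP_cs[where P="?P", OF csP] x lc by (auto simp: cs_def)
    ultimately show "0 \<le> ?P (s + Suc t) $$ (r,x) * BP ?P (2*N) s t $$ (x,c)" by simp
  qed simp
  also have "\<dots> = BP ?P (2*N) s (Suc t) $$ (r,c)"
    using mult_entry[OF A B r2 lc(2)] by simp
  finally show ?case .
qed

lemma reach_first:
  assumes "c < 2*N"
  shows "\<exists>t f. f < N \<and> reach N E t c f"
proof (cases "c < N")
  case True
  then show ?thesis using reach0[OF assms] by blast
next
  case False
  have "patt N E (c - N) c" using False assms unfolding patt_def by auto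
  moreover have "c - N < 2*N" using assms by simp
  ultimately have "reach N E (Suc 0) c (c - N)" using reachS[OF reach0[OF assms]] by blast
  moreover have "c - N < N" using False assms by simp
  ultimately show ?thesis by blast
qed

lemma reach_self:
  assumes "reach N E t c f" "f < N"
  shows "reach N E (Suc t) c f"
proof -
  have "patt N E f f" using assms(2) unfolding patt_def by auto
  then show ?thesis using reachS[OF assms(1)] assms(2) by simp
qed

lemma reach_mono:
  assumes "reach N E t c f" "f < N"
  shows "reach N E (t + d) c f"
  by (induction d) (use assms reach_self in auto)

lemma reach_edge:
  assumes "digraph_on N E" "reach N E t c f" "(r, f) \<in> E"
  shows "reach N E (Suc t) c r"
proof -
  have rf: "r < N" "f < N" using assms(1,3) unfolding digraph_on_def by auto
  have "patt N E r f" using rf assms(3) unfolding patt_def out_nbrs_def by auto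
  then show ?thesis using reachS[OF assms(2)] rf by simp
qed

lemma reach_trancl:
  assumes "digraph_on N E" "(r, f) \<in> E\<^sup>+"
  shows "reach N E t c f \<Longrightarrow> \<exists>s. reach N E s c r"
  using assms(2)
proof (induction arbitrary: t rule: trancl_induct)
  case (base y)
  then show ?case using reach_edge[OF assms(1)] by blast
next
  case (step y z)
  then show ?case using reach_edge[OF assms(1)] by blast
qed

lemma reach_exists:
  assumes "digraph_on N E" "strongly_connected N E" "c < 2*N" "r < N"
  shows "\<exists>t. reach N E t c r"
proof -
  obtain t f where f: "f < N" "reach N E t c f" using reach_first[OF assms(3)] by blast
  show ?thesis
  proof (cases "f = r")
    case True then show ?thesis using f by blast
  next
    case False
    then have "(r, f) \<in> E\<^sup>+" using assms(2,4) f(1) unfolding strongly_connected_def by blast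
    then show ?thesis using reach_trancl[OF assms(1)] f(2) by blast
  qed
qed

definition Lr :: "nat \<Rightarrow> (nat \<times> nat) set \<Rightarrow> nat" where
  "Lr N E = Suc (Max ((\<lambda>(c,r). SOME t. reach N E t c r) ` ({..<2*N} \<times> {..<N})))"

lemma reach_Lr:
  assumes "digraph_on N E" "strongly_connected N E" "c < 2*N" "r < 2*N"
  shows "reach N E (Lr N E) c r"
proof -
  let ?S = "(\<lambda>(c,r). SOME t. reach N E t c r) ` ({..<2*N} \<times> {..<N})"
  define T0 where "T0 = Max ?S"
  have fin: "finite ?S" by auto
  have T0: "reach N E T0 c f" if "f < N" for f
  proof -
    have ex: "\<exists>t. reach N E t c f" by (rule reach_exists[OF assms(1,2,3) that])
    let ?t = "SOME t. reach N E t c f"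
    have rt: "reach N E ?t c f" using someI_ex[OF ex] .
    have "?t \<in> ?S" using assms(3) that by force
    then have "?t \<le> T0" unfolding T0_def using fin by simp
    then have "T0 = ?t + (T0 - ?t)" by simp
    then show ?thesis using reach_mono[OF rt that, of "T0 - ?t"] by simp
  qed
  have L: "Lr N E = Suc T0" unfolding Lr_def T0_def by simp
  show ?thesis
  proof (cases "r < N")
    case True
    then show ?thesis unfolding L using reach_self[OF T0[OF True] True] by simp
  next
    case False
    have "r - N < N" using False assms(4) by simp
    moreover have "patt N E r (r - N)" using False assms(4) unfolding patt_def by auto
    ultimately show ?thesis unfolding L using reachS[OF T0[of "r - N"]] assms(4) by simp
  qed
qed

lemma Tprod_TT: "Tprod N E u a k \<omega> = TT (\<lambda>k. Phat N E u a k \<omega>) (2*N) k"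
  by (induction k) auto

lemma omega_conv:
  assumes dg: "digraph_on N E" and sc: "strongly_connected N E" and N: "0 < N"
    and pos: "\<And>k. k \<ge> 1 \<Longrightarrow> posw N E u a k \<omega>"
    and good: "\<And>K. \<exists>s\<ge>K. \<forall>k. s < k \<and> k \<le> s + Lr N E \<longrightarrow> bigw N E u a k \<omega>"
  shows "(\<lambda>k. ergodicity_coeff (Tprod N E u a k \<omega>)) \<longlonglongrightarrow> 0"
proof -
  let ?P = "\<lambda>k. Phat N E u a k \<omega>"
  let ?e = "(1 / (2 * (real N + 1))) ^ Lr N E"
  have csP: "cs (2*N) (?P k)" if "k \<ge> 1" for k using Phat_cs[OF pos[OF that] dg] .
  have g: "\<exists>s\<ge>K. \<forall>r<2*N. \<forall>c<2*N. ?e \<le> BP ?P (2*N) s (Lr N E) $$ (r,c)" for K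
  proof -
    obtain s where s: "s \<ge> K" "\<forall>k. s < k \<and> k \<le> s + Lr N E \<longrightarrow> bigw N E u a k \<omega>" using good by blast
    have "?e \<le> BP ?P (2*N) s (Lr N E) $$ (r,c)" if "r < 2*N" "c < 2*N" for r c
      by (rule BP_lb[OF pos dg reach_Lr[OF dg sc that(2) that(1)]]) (use s(2) in auto)
    then show ?thesis using s(1) by blast
  qed
  have "(\<lambda>k. ergodicity_coeff (TT ?P (2*N) k)) \<longlonglongrightarrow> 0"
    by (rule det_conv[where P="?P", OF csP _ _ g]) (use N in auto)
  then show ?thesis unfolding Tprod_TT .
qed

definition tm :: "((nat \<times> nat \<times> nat) + (nat \<times> nat)) \<Rightarrow> nat" where
  "tm = case_sum (\<lambda>(k, j, i). k) (\<lambda>(k, i). k)"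

definition blk :: "nat \<Rightarrow> (nat \<times> nat) set \<Rightarrow> nat \<Rightarrow> nat \<Rightarrow> ((nat \<times> nat \<times> nat) + (nat \<times> nat)) set" where
  "blk N E L m = {x \<in> draw_index N E. m * L < tm x \<and> tm x \<le> m * L + L}"

lemma blk_sub: "blk N E L m \<subseteq> draw_index N E"
  unfolding blk_def by auto

lemma blk_superset:
  assumes "digraph_on N E"
  shows "blk N E L m \<subseteq> Inl ` ({m*L<..m*L+L} \<times> {..<N} \<times> {..<N}) \<union> Inr ` ({m*L<..m*L+L} \<times> {..<N})"
proof
  fix x assume x: "x \<in> blk N E L m"
  show "x \<in> Inl ` ({m*L<..m*L+L} \<times> {..<N} \<times> {..<N}) \<union> Inr ` ({m*L<..m*L+L} \<times> {..<N})"
  proof (cases x)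
    case (Inl y)
    then obtain k j i where y: "x = Inl (k, j, i)" by (cases y) auto
    have "j \<in> out_nbrs E i \<union> {i}" "i < N" using x y unfolding blk_def draw_index_def by auto
    then have "j < N" using out_sub[OF assms] by blast
    then show ?thesis using x y \<open>i < N\<close> unfolding blk_def tm_def by auto
  next
    case (Inr y)
    then obtain k i where y: "x = Inr (k, i)" by (cases y) auto
    then show ?thesis using x unfolding blk_def tm_def draw_index_def by auto
  qed
qed

lemma blk_finite:
  assumes "digraph_on N E"
  shows "finite (blk N E L m)"
  by (rule finite_subset[OF blk_superset[OF assms]]) auto

lemma blk_card:
  assumes "digraph_on N E"
  shows "card (blk N E L m) \<le> L * (N * N) + L * N"
proof -
  let ?A = "{m*L<..m*L+L} \<times> {..<N} \<times> {..<N}" and ?B = "{m*L<..m*L+L} \<times> {..<N}"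
  have "card (blk N E L m) \<le> card (Inl ` ?A \<union> Inr ` ?B)"
    by (rule card_mono[OF _ blk_superset[OF assms]]) auto
  also have "\<dots> \<le> card (Inl ` ?A :: ((nat \<times> nat \<times> nat) + (nat \<times> nat)) set) + card (Inr ` ?B :: ((nat \<times> nat \<times> nat) + (nat \<times> nat)) set)"
    by (rule card_Un_le)
  also have "\<dots> \<le> card ?A + card ?B" by (intro add_mono card_image_le) auto
  also have "\<dots> = L * (N * N) + L * N" by (simp add: card_cartesian_product)
  finally show ?thesis .
qed

lemma blk_ne:
  assumes "0 < L" "0 < N"
  shows "Inr (m*L + 1, 0) \<in> blk N E L m"
  using assms unfolding blk_def draw_index_def tm_def by auto

lemma blk_disj:
  assumes "0 < L"
  shows "disjoint_family (blk N E L)"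
  unfolding disjoint_family_on_def
proof (intro ballI impI)
  fix m m' :: nat assume "m \<in> UNIV" "m' \<in> UNIV" "m \<noteq> m'"
  have *: False if "m1 < m2" "x \<in> blk N E L m1" "x \<in> blk N E L m2" for m1 m2 x
  proof -
    have "Suc m1 * L \<le> m2 * L" using that(1) by (intro mult_le_mono1) simp
    then show False using that(2,3) unfolding blk_def by auto
  qed
  show "blk N E L m \<inter> blk N E L m' = {}"
  proof (rule ccontr)
    assume "blk N E L m \<inter> blk N E L m' \<noteq> {}"
    then obtain x where "x \<in> blk N E L m" "x \<in> blk N E L m'" by blast
    then show False using * \<open>m \<noteq> m'\<close> by (cases "m < m'") (auto simp: not_less_iff_gr_or_eq)
  qed
qed

lemma unif_prob:
  assumes "prob_space M" "X \<in> borel_measurable M"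
    "distr M lborel X = uniform_measure lborel {0<..<1}" "S \<in> sets borel"
  shows "measure M (X -` S \<inter> space M) = measure lborel ({0<..<1::real} \<inter> S)"
proof -
  have m1: "measure lborel {0<..<1::real} = 1" by (simp add: measure_def)
  have "measure M (X -` S \<inter> space M) = measure (distr M lborel X) S"
    by (rule measure_distr[symmetric]) (use assms in auto)
  also have "\<dots> = measure (uniform_measure lborel {0<..<1::real}) S" using assms(3) by simp
  also have "\<dots> = measure lborel ({0<..<1::real} \<inter> S) / measure lborel {0<..<1::real}"
    by (rule measure_uniform_measure) (use assms(4) in auto)
  also have "\<dots> = measure lborel ({0<..<1::real} \<inter> S)" using m1 by simp
  finally show ?thesis .
qed

theorem lemma1:
  fixes M :: "'a measure" and N :: nat and E :: "(nat \<times> nat) set"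
    and u :: "nat \<Rightarrow> nat \<Rightarrow> nat \<Rightarrow> 'a \<Rightarrow> real"
    and a :: "nat \<Rightarrow> nat \<Rightarrow> 'a \<Rightarrow> real"
  assumes "prob_space M"
    and "N > 2"
    and "digraph_on N E"
    and "strongly_connected N E"
    and "prob_space.indep_vars M (\<lambda>_. borel) (draws u a) (draw_index N E)"
    and "\<And>x. x \<in> draw_index N E \<Longrightarrow>
           distr M lborel (draws u a x) = uniform_measure lborel {0<..<1}"
  shows "AE \<omega> in M. (\<lambda>k. ergodicity_coeff (Tprod N E u a k \<omega>)) \<longlonglongrightarrow> 0"
proof -
  interpret prob_space M by (rule assms(1))
  define X where "X = draws u a"
  define I where "I = draw_index N E"
  define F where "F = (\<lambda>x. {X x -` A \<inter> space M | A. A \<in> sets (borel :: real measure)})"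
  define L where "L = Lr N E"
  have L0: "0 < L" unfolding L_def Lr_def by simp
  have N0: "0 < N" using assms(2) by simp
  have dg: "digraph_on N E" and sc: "strongly_connected N E" using assms(3,4) by auto
  have iv: "indep_vars (\<lambda>_. borel) X I" using assms(5) unfolding X_def I_def .
  have rv: "X x \<in> borel_measurable M" if "x \<in> I" for x
    using iv that unfolding indep_vars_def2 by auto
  have ind: "indep_sets F I" using iv unfolding indep_vars_def2 F_def by auto
  have pr: "prob (X x -` S \<inter> space M) = measure lborel ({0<..<1::real} \<inter> S)"
    if "x \<in> I" "S \<in> sets borel" for x S
    by (rule unif_prob[OF assms(1) rv[OF that(1)]]) (use assms(6) that in \<open>auto simp: X_def I_def\<close>)
  have P1: "AE \<omega> in M. \<forall>x\<in>I. 0 < X x \<omega> \<and> X x \<omega> < 1"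
  proof (subst AE_ball_countable)
    show "countable I" by simp
    show "\<forall>x\<in>I. AE \<omega> in M. 0 < X x \<omega> \<and> X x \<omega> < 1"
    proof
      fix x assume x: "x \<in> I"
      have "prob (X x -` {0<..<1} \<inter> space M) = measure lborel ({0<..<1::real} \<inter> {0<..<1})"
        by (rule pr[OF x]) simp
      also have "\<dots> = 1" by (simp add: measure_def)
      finally have "AE \<omega> in M. \<omega> \<in> X x -` {0<..<1} \<inter> space M" by (rule AE_prob_1)
      then show "AE \<omega> in M. 0 < X x \<omega> \<and> X x \<omega> < 1" by (rule eventually_mono) auto
    qed
  qed
  define G where "G = (\<lambda>m. \<Inter>x\<in>blk N E L m. X x -` {1/2..} \<inter> space M)"
  define C where "C = L * (N * N) + L * N"
  define q :: real where "q = (1/2) ^ C"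
  have q: "0 < q" "q \<le> 1" unfolding q_def by (auto simp: power_le_one)
  have blkI: "blk N E L m \<subseteq> I" for m unfolding I_def by (rule blk_sub)
  have hb: "{1/2..} \<in> sets (borel :: real measure)" by simp
  have Fx: "X x -` {1/2..} \<inter> space M \<in> F x" for x unfolding F_def using hb by blast
  have Fev: "F x \<subseteq> events" if "x \<in> I" for x unfolding F_def using rv[OF that] by auto
  have Gev: "G m \<in> events" for m
    unfolding G_def
  proof (rule sets.finite_INT)
    show "finite (blk N E L m)" by (rule blk_finite[OF dg])
    show "blk N E L m \<noteq> {}" using blk_ne[OF L0 N0] by blast
    fix x assume "x \<in> blk N E L m"
    then have "x \<in> I" using blkI by blast
    then show "X x -` {1/2..} \<inter> space M \<in> events" using Fev Fx by blast
  qed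
  have probG: "q \<le> prob (G m)" for m
  proof -
    have "prob (G m) = (\<Prod>x\<in>blk N E L m. prob (X x -` {1/2..} \<inter> space M))"
      unfolding G_def
      by (rule indep_setsD[OF ind blkI _ blk_finite[OF dg]]) (use blk_ne[OF L0 N0] Fx in auto)
    also have "\<dots> = (\<Prod>x\<in>blk N E L m. 1/2)"
    proof (rule prod.cong[OF refl])
      fix x assume x: "x \<in> blk N E L m"
      have "prob (X x -` {1/2..} \<inter> space M) = measure lborel ({0<..<1::real} \<inter> {1/2..})"
        by (rule pr) (use x blkI in auto)
      also have "{0<..<1::real} \<inter> {1/2..} = {1/2..<1}" by auto
      also have "measure lborel {1/2..<1::real} = 1/2" using measure_lborel_Ico[of "1/2" "1::real"] by simp
      finally show "prob (X x -` {1/2..} \<inter> space M) = 1/2" .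
    qed
    also have "\<dots> = (1/2) ^ card (blk N E L m)" by simp
    also have "\<dots> \<ge> q" unfolding q_def C_def using blk_card[OF dg] by (intro power_decreasing) auto
    finally show ?thesis .
  qed
  define SG where "SG = (\<lambda>m. sigma_sets (space M) (\<Union>x\<in>blk N E L m. F x))"
  have indB: "indep_sets SG UNIV"
    unfolding SG_def
  proof (rule indep_sets_collect_sigma)
    show "indep_sets F (\<Union>m\<in>UNIV. blk N E L m)"
      by (rule indep_sets_mono_index[OF _ ind]) (use blkI in auto)
    show "Int_stable (F x)" for x
      unfolding F_def Int_stable_def
      apply auto
      apply (rule_tac x="A \<inter> Aa" in exI)
      apply auto
      done
    show "disjoint_family_on (blk N E L) UNIV" using blk_disj[OF L0] .
  qed
  have bad_in: "space M - G m \<in> SG m" for m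
  proof -
    have sub: "(\<Union>x\<in>blk N E L m. F x) \<subseteq> Pow (space M)" unfolding F_def by auto
    interpret S: sigma_algebra "space M" "SG m" unfolding SG_def by (rule sigma_algebra_sigma_sets[OF sub])
    have "G m \<in> SG m"
      unfolding G_def
    proof (rule S.finite_INT)
      show "finite (blk N E L m)" by (rule blk_finite[OF dg])
      show "blk N E L m \<noteq> {}" using blk_ne[OF L0 N0] by blast
      fix x assume "x \<in> blk N E L m"
      then show "X x -` {1/2..} \<inter> space M \<in> SG m"
        unfolding SG_def using Fx by (auto intro: sigma_sets.Basic)
    qed
    then show ?thesis by (rule S.compl_sets)
  qed
  have inf_bound: "prob (\<Inter>m\<in>{m0..m0+n}. space M - G m) \<le> (1 - q) ^ Suc n" for m0 n
  proof -
    have "prob (\<Inter>m\<in>{m0..m0+n}. space M - G m) = (\<Prod>m\<in>{m0..m0+n}. prob (space M - G m))"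
      by (rule indep_setsD[OF indB]) (use bad_in in auto)
    also have "\<dots> \<le> (\<Prod>m\<in>{m0..m0+n}. 1 - q)"
    proof (rule prod_mono)
      fix m assume "m \<in> {m0..m0+n}"
      have "prob (space M - G m) = 1 - prob (G m)" using prob_compl[OF Gev] .
      then show "0 \<le> prob (space M - G m) \<and> prob (space M - G m) \<le> 1 - q" using probG[of m] by simp
    qed
    also have "\<dots> = (1 - q) ^ Suc n" by simp
    finally show ?thesis .
  qed
  have P2: "AE \<omega> in M. \<forall>m0. \<exists>m\<ge>m0. \<omega> \<in> G m"
  proof (subst AE_all_countable, intro allI)
    fix m0 :: nat
    define B where "B = space M \<inter> (\<Inter>m\<in>{m0..}. space M - G m)"
    have Bev: "B \<in> events" unfolding B_def using Gev by auto
    have Ble: "prob B \<le> (1 - q) ^ Suc n" for n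
    proof -
      have "B \<subseteq> (\<Inter>m\<in>{m0..m0+n}. space M - G m)" unfolding B_def by auto
      moreover have "(\<Inter>m\<in>{m0..m0+n}. space M - G m) \<in> events" using Gev by auto
      ultimately have "prob B \<le> prob (\<Inter>m\<in>{m0..m0+n}. space M - G m)" by (rule finite_measure_mono)
      then show ?thesis using inf_bound[of m0 n] by simp
    qed
    have "prob B = 0"
    proof (rule ccontr)
      assume "prob B \<noteq> 0"
      then have pos: "0 < prob B" using measure_nonneg[of M B] by linarith
      have q1: "1 - q < 1" using q by simp
      obtain n where n: "(1 - q) ^ n < prob B" using real_arch_pow_inv[OF pos q1] by blast
      have "(1 - q) ^ Suc n \<le> (1 - q) ^ n" using q by (intro power_decreasing) auto
      then show False using Ble[of n] n by simp
    qed
    then have "B \<in> null_sets M" using Bev by (simp add: emeasure_eq_measure null_sets_def)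
    then show "AE \<omega> in M. \<exists>m\<ge>m0. \<omega> \<in> G m"
      by (rule AE_I') (auto simp: B_def)
  qed
  show ?thesis
    using P1 P2
  proof eventually_elim
    case (elim \<omega>)
    have pos: "posw N E u a k \<omega>" if "k \<ge> 1" for k
      unfolding posw_def
    proof (intro allI impI conjI ballI)
      fix i assume i: "i < N"
      { fix j assume j: "j \<in> out_nbrs E i \<union> {i}"
        have "Inl (k, j, i) \<in> I" using that i j unfolding I_def draw_index_def by (intro UnI1 imageI) simp
        then have "0 < X (Inl (k, j, i)) \<omega> \<and> X (Inl (k, j, i)) \<omega> < 1" using elim(1) by blast
        then show "0 < u k j i \<omega>" "u k j i \<omega> < 1" by (simp_all add: X_def draws_def) }
      have "Inr (k, i) \<in> I" using that i unfolding I_def draw_index_def by (intro UnI2 imageI) simp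
      then have "0 < X (Inr (k, i)) \<omega> \<and> X (Inr (k, i)) \<omega> < 1" using elim(1) by blast
      then show "0 < a k i \<omega>" "a k i \<omega> < 1" by (simp_all add: X_def draws_def)
    qed
    have good: "\<exists>s\<ge>K. \<forall>k. s < k \<and> k \<le> s + Lr N E \<longrightarrow> bigw N E u a k \<omega>" for K
    proof -
      obtain m where m: "m \<ge> K" "\<omega> \<in> G m" using elim(2) by blast
      have "m \<le> m * L" using L0 by simp
      then have "K \<le> m * L" using m(1) by linarith
      moreover have "bigw N E u a k \<omega>" if k: "m * L < k" "k \<le> m * L + L" for k
        unfolding bigw_def
      proof (intro allI impI conjI ballI)
        fix i assume i: "i < N"
        { fix j assume j: "j \<in> out_nbrs E i \<union> {i}"
          have "Inl (k, j, i) \<in> draw_index N E" using k i j unfolding draw_index_def by (intro UnI1 imageI) simp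
          then have "Inl (k, j, i) \<in> blk N E L m" using k unfolding blk_def tm_def by simp
          then have "\<omega> \<in> X (Inl (k, j, i)) -` {1/2..} \<inter> space M" using m(2) unfolding G_def by blast
          then show "1/2 \<le> u k j i \<omega>" by (simp add: X_def draws_def) }
        have "Inr (k, i) \<in> draw_index N E" using k i unfolding draw_index_def by (intro UnI2 imageI) simp
        then have "Inr (k, i) \<in> blk N E L m" using k unfolding blk_def tm_def by simp
        then have "\<omega> \<in> X (Inr (k, i)) -` {1/2..} \<inter> space M" using m(2) unfolding G_def by blast
        then show "1/2 \<le> a k i \<omega>" by (simp add: X_def draws_def)
      qed
      ultimately show ?thesis unfolding L_def by blast
    qed
    show ?case by (rule omega_conv[OF dg sc N0 pos good]) auto
  qed
qed

end
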